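(* Let $\mathcal{V}$ be a real, separable, infinite-dimensional Hilbert space with orthonormal basis $(e_n)_{n\ge1}$. Let $\mathcal{X}=\{v=\sum_{n\ge1}c_ne_n\in\mathcal{V}:\sum_{n\ge1}|c_n|\le1\}$ and $\mathcal{Y}=\{v\in\mathcal{V}:\|v\|\le1\}$. Then there exists a class $\mathcal{F}\subset S_1(\mathcal{V},\mathcal{V})$ such that for every $T\in\mathbb{N}$: (i) $\mathrm{Rad}_T(\mathcal{F})\ge T/2$; (ii) $\inf_{\mathcal{A}}\mathtt{R}_{\mathcal{A}}(T,\mathcal{F})\le 2+8\sqrt{T\ln(2T)}$. In particular $\mathcal{F}$ is online learnable but sequential uniform convergence fails for its squared-loss class.
   Context: $S_1(\mathcal{V},\mathcal{V})$ is the set of compact linear operators $f:\mathcal{V}\to\mathcal{V}$ whose singular values are summable (trace class). Online protocol with instance space $\mathcal{X}$ and target space $\mathcal{Y}$: for $t=1,\dots,T$, an adversary picks $(x_t,y_t)\in\mathcal{X}\times\mathcal{Y}$ and reveals $x_t$; the learner $\mathcal{A}$, using past labeled examples and $x_t$ (and possibly internal randomness), predicts $\mathcal{A}(x_t)\in\mathcal{Y}$, then $y_t$ is revealed. The regret is \[\mathtt{R}_{\mathcal{A}}(T,\mathcal{F})=\sup_{(x_1,y_1),\dots,(x_T,y_T)\in\mathcal{X}\times\mathcal{Y}}\mathbb{E}\Big[\sum_{t=1}^T\|\mathcal{A}(x_t)-y_t\|^2-\inf_{f\in\mathcal{F}}\sum_{t=1}^T\|f(x_t)-y_t\|^2\Big].\]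 Sequential Rademacher complexity: with $\sigma_1,\dots,\sigma_T$ i.i.d. uniform on $\{-1,1\}$ and $\sigma_{<t}=(\sigma_1,\dots,\sigma_{t-1})$, \[\mathrm{Rad}_T(\mathcal{F})=\sup_{x,y}\mathbb{E}_\sigma\Big[\sup_{f\in\mathcal{F}}\sum_{t=1}^T\sigma_t\|f(x_t(\sigma_{<t}))-y_t(\sigma_{<t})\|^2\Big],\] the supremum over all sequences of maps $(x_t,y_t):\{-1,1\}^{t-1}\to\mathcal{X}\times\mathcal{Y}$. *)

theory Defs
  imports "HOL-Probability.Probability"
begin

text \<open>Singular values of a bounded operator on a Hilbert space, via approximation
  numbers: the n-th singular value (0-indexed) is the distance (in operator norm)
  from f to the bounded linear operators of rank at most n. For compact operators
  on Hilbert spaces these coincide with the singular values.\<close>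
definition singular_value :: "('a::real_normed_vector \<Rightarrow> 'a) \<Rightarrow> nat \<Rightarrow> real" where
  "singular_value f n = Inf {onorm (\<lambda>v. f v - g v) | g. bounded_linear g \<and>
      (\<exists>B. finite B \<and> card B \<le> n \<and> range g \<subseteq> span B)}"

definition trace_class :: "('a::real_normed_vector \<Rightarrow> 'a) \<Rightarrow> bool" where
  "trace_class f \<longleftrightarrow> bounded_linear f \<and> compact (closure (f ` cball 0 1))
      \<and> summable (singular_value f)"

text \<open>A deterministic online strategy: given the past labelled examples and the current
  instance, output a prediction.  A (randomized) learner is a probability mass function
  over deterministic strategies (internal randomness), whose predictions lie in Y.\<close>
type_synonym 'a strategy = "('a \<times> 'a) list \<Rightarrow> 'a \<Rightarrow> 'a"

definition learners :: "'a set \<Rightarrow> 'a strategy pmf set" where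
  "learners Y = {P. \<forall>A\<in>set_pmf P. \<forall>h x. A h x \<in> Y}"

definition cum_loss :: "'a::real_normed_vector strategy \<Rightarrow> ('a \<times> 'a) list \<Rightarrow> real" where
  "cum_loss A s = (\<Sum>t<length s. (norm (A (take t s) (fst (s ! t)) - snd (s ! t)))\<^sup>2)"

definition best_loss :: "('a::real_normed_vector \<Rightarrow> 'a) set \<Rightarrow> ('a \<times> 'a) list \<Rightarrow> real" where
  "best_loss F s = (INF f\<in>F. \<Sum>t<length s. (norm (f (fst (s ! t)) - snd (s ! t)))\<^sup>2)"

definition regret :: "'a set \<Rightarrow> 'a set \<Rightarrow> nat \<Rightarrow> ('a::real_normed_vector \<Rightarrow> 'a) set
    \<Rightarrow> 'a strategy pmf \<Rightarrow> ereal" where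
  "regret X Y T F P = (SUP s\<in>{s. length s = T \<and> set s \<subseteq> X \<times> Y}.
      ereal (measure_pmf.expectation P (\<lambda>A. cum_loss A s - best_loss F s)))"

definition signs :: "nat \<Rightarrow> real list set" where
  "signs T = {\<sigma>. length \<sigma> = T \<and> set \<sigma> \<subseteq> {-1, 1}}"

text \<open>Trees are maps x t, y t from sign prefixes
  (sigma_1..sigma_t, as a list of length t) to X and Y; t ranges over 0..T-1 here.
  The expectation over uniform signs is the average over the 2^T sign vectors.\<close>
definition seq_rad :: "'a set \<Rightarrow> 'a set \<Rightarrow> nat \<Rightarrow> ('a::real_normed_vector \<Rightarrow> 'a) set \<Rightarrow> ereal" where
  "seq_rad X Y T F = (SUP xy\<in>{(x, y). \<forall>t \<sigma>. x t \<sigma> \<in> X \<and> y t \<sigma> \<in> Y}.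
      ereal (1 / 2 ^ T) * (\<Sum>\<sigma>\<in>signs T. SUP f\<in>F.
        ereal (\<Sum>t<T. \<sigma> ! t * (norm (f (fst xy t (take t \<sigma>)) - snd xy t (take t \<sigma>)))\<^sup>2)))"

end

theory Submission
  imports Defs "HOL-Library.Nat_Bijection"
begin

definition Wv :: "(nat \<Rightarrow> 'a::real_inner) \<Rightarrow> nat \<Rightarrow> 'a" where
  "Wv e k = (\<Sum>v\<in>set_decode k. e v)"

definition fk :: "(nat \<Rightarrow> 'a::real_inner) \<Rightarrow> nat \<Rightarrow> 'a \<Rightarrow> 'a" where
  "fk e k = (\<lambda>x. (x \<bullet> Wv e k) *\<^sub>R e k)"

lemma rank_one_trace_class:
  fixes w u :: "'a::real_inner"
  shows "trace_class (\<lambda>x. (x \<bullet> w) *\<^sub>R u)"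
proof -
  let ?f = "\<lambda>x. (x \<bullet> w) *\<^sub>R u"
  have bl: "bounded_linear ?f"
    by (intro bounded_linear_compose[OF bounded_linear_scaleR_left] bounded_linear_inner_left)
  define K where "K = (\<lambda>c. c *\<^sub>R u) ` {-norm w..norm w}"
  have cK: "compact K" unfolding K_def
    by (intro compact_continuous_image continuous_intros compact_Icc)
  have sub: "?f ` cball 0 1 \<subseteq> K"
  proof
    fix z assume "z \<in> ?f ` cball 0 1"
    then obtain x where x: "norm x \<le> 1" "z = ?f x" by auto
    have "\<bar>x \<bullet> w\<bar> \<le> norm x * norm w" by (rule Cauchy_Schwarz_ineq2)
    also have "\<dots> \<le> norm w" using x(1) by (simp add: mult_left_le_one_le)
    finally show "z \<in> K" unfolding K_def using x(2) by (intro image_eqI[of _ _ "x \<bullet> w"]) (auto simp: abs_le_iff)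
  qed
  have "closure (?f ` cball 0 1) \<subseteq> K"
    using sub compact_imp_closed[OF cK] by (rule closure_minimal)
  then have cc: "compact (closure (?f ` cball 0 1))"
    using compact_Int_closed[OF cK closed_closure, of "?f ` cball 0 1"] by (simp add: Int_absorb1)
  have sv: "singular_value ?f n = 0" if "n \<ge> 1" for n
    unfolding singular_value_def
  proof (rule cInf_eq_minimum)
    show "0 \<in> {onorm (\<lambda>v. ?f v - g v) |g. bounded_linear g \<and> (\<exists>B. finite B \<and> card B \<le> n \<and> range g \<subseteq> span B)}"
    proof -
      have "range ?f \<subseteq> span {u}" by (auto intro: span_base span_scale)
      then show ?thesis using bl that by (intro CollectI exI[of _ ?f]) (auto intro!: exI[of _ "{u}"] simp: onorm_zero)
    qed
  next
    fix x assume "x \<in> {onorm (\<lambda>v. ?f v - g v) |g. bounded_linear g \<and> (\<exists>B. finite B \<and> card B \<le> n \<and> range g \<subseteq> span B)}"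
    then obtain g where "x = onorm (\<lambda>v. ?f v - g v)" "bounded_linear g" by auto
    then show "0 \<le> x" using bl by (simp add: onorm_pos_le bounded_linear_sub)
  qed
  have "summable (singular_value ?f)"
    by (rule summable_finite[of "{0}"]) (use sv in auto)
  then show ?thesis unfolding trace_class_def using bl cc by auto
qed

lemma inner_W:
  assumes on: "\<forall>i j. e i \<bullet> e j = (if i = j then 1 else 0)"
  shows "e m \<bullet> Wv e k = (if m \<in> set_decode k then 1 else 0)"
proof -
  have on': "\<And>i j. e i \<bullet> e j = (if i = j then 1 else 0)" using on by blast
  show ?thesis unfolding Wv_def inner_sum_right by (simp only: on') simp
qed

lemma abs_inner_W_le:
  assumes "summable (\<lambda>n. \<bar>x \<bullet> e n\<bar>)" "(\<Sum>n. \<bar>x \<bullet> e n\<bar>) \<le> 1"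
  shows "\<bar>x \<bullet> Wv e k\<bar> \<le> 1"
proof -
  have "\<bar>x \<bullet> Wv e k\<bar> = \<bar>\<Sum>v\<in>set_decode k. x \<bullet> e v\<bar>"
    unfolding Wv_def inner_sum_right by simp
  also have "\<dots> \<le> (\<Sum>v\<in>set_decode k. \<bar>x \<bullet> e v\<bar>)" by (rule sum_abs)
  also have "\<dots> \<le> (\<Sum>n. \<bar>x \<bullet> e n\<bar>)" by (rule sum_le_suminf) (use assms in auto)
  finally show ?thesis using assms by simp
qed

lemma norm_e:
  assumes on: "\<forall>i j. e i \<bullet> e j = (if i = j then 1 else 0)"
  shows "norm (e k) = 1"
  using on by (simp add: norm_eq_sqrt_inner)

lemma bessel_finite:
  fixes e :: "nat \<Rightarrow> 'a::real_inner"
  assumes on: "\<forall>i j. e i \<bullet> e j = (if i = j then 1 else 0)" and D: "finite D"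
  shows "(\<Sum>k\<in>D. (y \<bullet> e k)\<^sup>2) \<le> (norm y)\<^sup>2"
proof -
  define z where "z = (\<Sum>k\<in>D. (y \<bullet> e k) *\<^sub>R e k)"
  have zz: "z \<bullet> z = (\<Sum>k\<in>D. (y \<bullet> e k)\<^sup>2)"
  proof -
    have on': "\<And>i j. e i \<bullet> e j = (if i = j then 1 else 0)" using on by blast
    show ?thesis unfolding z_def inner_sum_left inner_sum_right inner_scaleR_left inner_scaleR_right
      by (simp only: on') (simp add: D power2_eq_square if_distrib cong: if_cong)
  qed
  have yz: "y \<bullet> z = (\<Sum>k\<in>D. (y \<bullet> e k)\<^sup>2)"
    unfolding z_def inner_sum_right by (simp add: power2_eq_square)
  have "0 \<le> (y - z) \<bullet> (y - z)" by simp
  also have "\<dots> = y \<bullet> y - 2 * (y \<bullet> z) + z \<bullet> z"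
    by (simp add: inner_diff_left inner_diff_right inner_commute)
  finally show ?thesis using zz yz by (simp add: power2_norm_eq_inner)
qed

lemma gain_le:
  fixes e :: "nat \<Rightarrow> 'a::real_inner"
  assumes "norm u = 1"
  shows "(norm y)\<^sup>2 - (norm (c *\<^sub>R u - y))\<^sup>2 \<le> (y \<bullet> u)\<^sup>2"
proof -
  have uu: "u \<bullet> u = 1" using assms by (simp add: power2_norm_eq_inner[symmetric])
  have "(norm (c *\<^sub>R u - y))\<^sup>2 = c\<^sup>2 - 2 * c * (y \<bullet> u) + (norm y)\<^sup>2"
    unfolding power2_norm_eq_inner
    by (simp add: inner_diff_left inner_diff_right inner_commute uu power2_eq_square algebra_simps)
  moreover have "0 \<le> (c - y \<bullet> u)\<^sup>2" by simp
  ultimately show ?thesis by (simp add: power2_diff)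
qed

lemma exp_neg_le_quad:
  fixes x :: real
  assumes "0 \<le> x"
  shows "exp (- x) \<le> 1 - x + x\<^sup>2 / 2"
proof -
  let ?g = "\<lambda>x::real. 1 - x + x\<^sup>2 / 2 - exp (- x)"
  have "?g 0 \<le> ?g x"
  proof (rule DERIV_nonneg_imp_increasing_open[OF assms])
    fix z :: real assume "0 < z" "z < x"
    have "DERIV ?g z :> (- 1 + z + exp (- z))"
      by (auto intro!: derivative_eq_intros simp: power2_eq_square)
    moreover have "0 \<le> - 1 + z + exp (- z)" using exp_ge_add_one_self[of "- z"] by simp
    ultimately show "\<exists>y. DERIV ?g z :> y \<and> 0 \<le> y" by blast
  next
    show "continuous_on {0..x} ?g" by (intro continuous_intros) auto
  qed
  then show ?thesis by simp
qed

lemma hedge: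
  fixes l :: "'j \<Rightarrow> nat \<Rightarrow> real" and lrn :: "nat \<Rightarrow> real"
  assumes J: "finite J" "J \<noteq> {}" and eta: "\<eta> > 0"
    and l0: "\<And>j t. j \<in> J \<Longrightarrow> 0 \<le> l j t" and l4: "\<And>j t. j \<in> J \<Longrightarrow> l j t \<le> 4"
    and lrn: "\<And>t. t < T \<Longrightarrow> lrn t \<le> (\<Sum>j\<in>J. exp (- \<eta> * (\<Sum>t'<t. l j t')) * l j t) / (\<Sum>j\<in>J. exp (- \<eta> * (\<Sum>t'<t. l j t')))"
    and j0: "j0 \<in> J"
  shows "(\<Sum>t<T. lrn t) \<le> (\<Sum>t<T. l j0 t) + ln (card J) / \<eta> + 8 * \<eta> * T"
proof -
  define W where "W j t = exp (- \<eta> * (\<Sum>t'<t. l j t'))" for j t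
  define Z where "Z t = (\<Sum>j\<in>J. W j t)" for t
  have Wpos: "0 < W j t" for j t unfolding W_def by simp
  have Zpos: "0 < Z t" for t unfolding Z_def using J Wpos by (intro sum_pos) auto
  have step: "Z (Suc t) \<le> Z t * exp (- \<eta> * lrn t + 8 * \<eta>\<^sup>2)" if t: "t < T" for t
  proof -
    have WS: "W j (Suc t) = W j t * exp (- (\<eta> * l j t))" for j
      unfolding W_def by (simp add: algebra_simps exp_add[symmetric])
    have "Z (Suc t) = (\<Sum>j\<in>J. W j t * exp (- (\<eta> * l j t)))" unfolding Z_def WS ..
    also have "\<dots> \<le> (\<Sum>j\<in>J. W j t * (1 - \<eta> * l j t + 8 * \<eta>\<^sup>2))"
    proof (rule sum_mono)
      fix j assume j: "j \<in> J"
      have x0: "0 \<le> \<eta> * l j t" using eta l0[OF j] by simp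
      have "exp (- (\<eta> * l j t)) \<le> 1 - \<eta> * l j t + (\<eta> * l j t)\<^sup>2 / 2"
        by (rule exp_neg_le_quad[OF x0])
      also have "(\<eta> * l j t)\<^sup>2 \<le> (\<eta> * 4)\<^sup>2"
        using x0 l4[OF j] eta by (intro power_mono) auto
      then have "(\<eta> * l j t)\<^sup>2 / 2 \<le> 8 * \<eta>\<^sup>2" by (simp add: power_mult_distrib)
      finally show "W j t * exp (- (\<eta> * l j t)) \<le> W j t * (1 - \<eta> * l j t + 8 * \<eta>\<^sup>2)"
        using Wpos[of j t] by (intro mult_left_mono) auto
    qed
    also have "\<dots> = Z t * (1 + 8 * \<eta>\<^sup>2) - \<eta> * (\<Sum>j\<in>J. W j t * l j t)"
      unfolding Z_def by (simp add: algebra_simps sum.distrib sum_distrib_left sum_subtractf)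
    also have "\<eta> * (\<Sum>j\<in>J. W j t * l j t) \<ge> \<eta> * (Z t * lrn t)"
    proof -
      have "lrn t \<le> (\<Sum>j\<in>J. W j t * l j t) / Z t" using lrn[OF t] unfolding W_def Z_def .
      then have "Z t * lrn t \<le> (\<Sum>j\<in>J. W j t * l j t)" using Zpos[of t] by (simp add: field_simps)
      then show ?thesis using eta by simp
    qed
    then have "Z t * (1 + 8 * \<eta>\<^sup>2) - \<eta> * (\<Sum>j\<in>J. W j t * l j t) \<le> Z t * (1 + (- \<eta> * lrn t + 8 * \<eta>\<^sup>2))"
      by (simp add: algebra_simps)
    also have "\<dots> \<le> Z t * exp (- \<eta> * lrn t + 8 * \<eta>\<^sup>2)"
      using Zpos[of t] exp_ge_add_one_self by (intro mult_left_mono) auto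
    finally show ?thesis .
  qed
  have ind: "t \<le> T \<Longrightarrow> Z t \<le> card J * exp (- \<eta> * (\<Sum>t'<t. lrn t') + 8 * \<eta>\<^sup>2 * t)" for t
  proof (induction t)
    case 0
    then show ?case unfolding Z_def W_def by simp
  next
    case (Suc t)
    then have "Z (Suc t) \<le> Z t * exp (- \<eta> * lrn t + 8 * \<eta>\<^sup>2)" by (intro step) auto
    also have "\<dots> \<le> card J * exp (- \<eta> * (\<Sum>t'<t. lrn t') + 8 * \<eta>\<^sup>2 * t) * exp (- \<eta> * lrn t + 8 * \<eta>\<^sup>2)"
      using Suc by (intro mult_right_mono) auto
    also have "\<dots> = card J * exp (- \<eta> * (\<Sum>t'<Suc t. lrn t') + 8 * \<eta>\<^sup>2 * Suc t)"
      by (simp add: exp_add[symmetric] algebra_simps)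
    finally show ?case .
  qed
  have "W j0 T \<le> Z T" unfolding Z_def using J j0 Wpos by (intro member_le_sum) (auto intro: less_imp_le)
  also have "\<dots> \<le> card J * exp (- \<eta> * (\<Sum>t'<T. lrn t') + 8 * \<eta>\<^sup>2 * T)" by (rule ind) simp
  finally have "ln (W j0 T) \<le> ln (card J * exp (- \<eta> * (\<Sum>t'<T. lrn t') + 8 * \<eta>\<^sup>2 * T))"
    using Wpos by (subst ln_le_cancel_iff) (auto intro: order.strict_trans2)
  also have "\<dots> = ln (card J) + (- \<eta> * (\<Sum>t'<T. lrn t') + 8 * \<eta>\<^sup>2 * T)"
    using J by (subst ln_mult) (auto simp: card_gt_0_iff)
  finally have "- \<eta> * (\<Sum>t'<T. l j0 t') \<le> ln (card J) - \<eta> * (\<Sum>t'<T. lrn t') + 8 * \<eta>\<^sup>2 * T"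
    unfolding W_def by simp
  then have "\<eta> * (\<Sum>t'<T. lrn t') \<le> \<eta> * ((\<Sum>t'<T. l j0 t') + ln (card J) / \<eta> + 8 * \<eta> * T)"
    using eta by (simp add: algebra_simps power2_eq_square)
  then show ?thesis using eta by simp
qed

definition clipb :: "'a::real_normed_vector \<Rightarrow> 'a" where
  "clipb z = (if norm z \<le> 1 then z else z /\<^sub>R norm z)"

lemma norm_clipb: "norm (clipb z) \<le> 1"
  unfolding clipb_def by (auto simp: field_simps)

definition gn :: "(nat \<Rightarrow> 'a::real_inner) \<Rightarrow> nat \<Rightarrow> 'a \<times> 'a \<Rightarrow> real" where
  "gn e k p = (norm (snd p))\<^sup>2 - (norm (fk e k (fst p) - snd p))\<^sup>2"

definition G :: "(nat \<Rightarrow> 'a::real_inner) \<Rightarrow> nat \<Rightarrow> ('a \<times> 'a) list \<Rightarrow> real" where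
  "G e k h = (\<Sum>i<length h. gn e k (h ! i))"

definition Rch :: "(nat \<Rightarrow> 'a::real_inner) \<Rightarrow> nat \<Rightarrow> ('a \<times> 'a) list \<Rightarrow> nat set" where
  "Rch e \<tau> h = {k. 1 \<le> G e k (take \<tau> h)}"

definition expert :: "(nat \<Rightarrow> 'a::real_inner) \<Rightarrow> nat \<times> nat \<Rightarrow> ('a \<times> 'a) list \<Rightarrow> 'a \<Rightarrow> 'a" where
  "expert e j h x = (if fst j \<le> length h \<and> snd j < card (Rch e (fst j) h)
      then clipb (fk e (sorted_list_of_set (Rch e (fst j) h) ! snd j) x) else 0)"

lemma norm_expert: "norm (expert e j h x) \<le> 1"
  unfolding expert_def using norm_clipb by auto

definition eloss :: "(nat \<Rightarrow> 'a::real_inner) \<Rightarrow> nat \<times> nat \<Rightarrow> ('a \<times> 'a) list \<Rightarrow> nat \<Rightarrow> real" where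
  "eloss e j s t = (norm (expert e j (take t s) (fst (s ! t)) - snd (s ! t)))\<^sup>2"

definition Lx :: "(nat \<Rightarrow> 'a::real_inner) \<Rightarrow> nat \<times> nat \<Rightarrow> ('a \<times> 'a) list \<Rightarrow> real" where
  "Lx e j h = (\<Sum>t<length h. eloss e j h t)"

definition JT :: "nat \<Rightarrow> (nat \<times> nat) set" where
  "JT T = {0..T} \<times> {0..<T}"

definition learner :: "(nat \<Rightarrow> 'a::real_inner) \<Rightarrow> nat \<Rightarrow> real \<Rightarrow> ('a \<times> 'a) list \<Rightarrow> 'a \<Rightarrow> 'a" where
  "learner e T \<eta> h x = (\<Sum>j\<in>JT T. exp (- \<eta> * Lx e j h) *\<^sub>R expert e j h x) /\<^sub>R (\<Sum>j\<in>JT T. exp (- \<eta> * Lx e j h))"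

lemma eloss_take: "t' < t \<Longrightarrow> eloss e j (take t s) t' = eloss e j s t'"
  unfolding eloss_def by (simp add: min_def)

lemma Lx_take: "t \<le> length s \<Longrightarrow> Lx e j (take t s) = (\<Sum>t'<t. eloss e j s t')"
  unfolding Lx_def by (simp add: eloss_take min_def)

lemma weighted_sq_le:
  fixes w a :: "'j \<Rightarrow> real"
  assumes "finite J" "\<And>j. j \<in> J \<Longrightarrow> 0 \<le> w j" "0 < (\<Sum>j\<in>J. w j)"
  shows "((\<Sum>j\<in>J. w j * a j) / (\<Sum>j\<in>J. w j))\<^sup>2 \<le> (\<Sum>j\<in>J. w j * (a j)\<^sup>2) / (\<Sum>j\<in>J. w j)"
proof -
  define W where "W = (\<Sum>j\<in>J. w j)"
  define m where "m = (\<Sum>j\<in>J. w j * a j) / W"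
  have "0 \<le> (\<Sum>j\<in>J. w j * (a j - m)\<^sup>2)" using assms by (intro sum_nonneg) auto
  also have "\<dots> = (\<Sum>j\<in>J. w j * (a j)\<^sup>2) - 2 * m * (\<Sum>j\<in>J. w j * a j) + m\<^sup>2 * W"
    unfolding W_def by (simp add: power2_diff algebra_simps sum.distrib sum_subtractf sum_distrib_left sum_distrib_right)
  also have "(\<Sum>j\<in>J. w j * a j) = m * W" unfolding m_def using assms(3) W_def by simp
  finally have "m\<^sup>2 * W \<le> (\<Sum>j\<in>J. w j * (a j)\<^sup>2)" by (simp add: power2_eq_square algebra_simps)
  then show ?thesis using assms(3) unfolding m_def[symmetric] W_def[symmetric] by (simp add: field_simps)
qed

lemma mixture_loss:
  fixes z :: "'j \<Rightarrow> 'a::real_inner"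
  assumes "finite J" "\<And>j. j \<in> J \<Longrightarrow> 0 \<le> w j" "0 < (\<Sum>j\<in>J. w j)"
  shows "(norm ((\<Sum>j\<in>J. w j *\<^sub>R z j) /\<^sub>R (\<Sum>j\<in>J. w j) - y))\<^sup>2
     \<le> (\<Sum>j\<in>J. w j * (norm (z j - y))\<^sup>2) / (\<Sum>j\<in>J. w j)"
proof -
  define W where "W = (\<Sum>j\<in>J. w j)"
  have "(\<Sum>j\<in>J. w j *\<^sub>R z j) /\<^sub>R W - y = (\<Sum>j\<in>J. w j *\<^sub>R (z j - y)) /\<^sub>R W"
    using assms(3) unfolding W_def
    by (simp add: scaleR_diff_right sum_subtractf scaleR_sum_left[symmetric] algebra_simps)
  then have "norm ((\<Sum>j\<in>J. w j *\<^sub>R z j) /\<^sub>R W - y) \<le> (\<Sum>j\<in>J. w j * norm (z j - y)) / W"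
    using assms(3) unfolding W_def
    by (simp add: divide_right_mono norm_sum[THEN order_trans] sum_mono assms(2) abs_of_nonneg
          order_trans[OF norm_sum] divide_inverse[symmetric] mult.commute[of "inverse _"])
  then have "(norm ((\<Sum>j\<in>J. w j *\<^sub>R z j) /\<^sub>R W - y))\<^sup>2 \<le> ((\<Sum>j\<in>J. w j * norm (z j - y)) / W)\<^sup>2"
    by (intro power_mono) auto
  also have "\<dots> \<le> (\<Sum>j\<in>J. w j * (norm (z j - y))\<^sup>2) / W"
    unfolding W_def by (rule weighted_sq_le[OF assms])
  finally show ?thesis unfolding W_def .
qed

lemma norm_fk_le:
  assumes on: "\<forall>i j. e i \<bullet> e j = (if i = j then 1 else 0)"
    and "summable (\<lambda>n. \<bar>x \<bullet> e n\<bar>)" "(\<Sum>n. \<bar>x \<bullet> e n\<bar>) \<le> 1"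
  shows "norm (fk e k x) \<le> 1"
  unfolding fk_def using abs_inner_W_le[OF assms(2,3)] norm_e[OF on] by simp

lemma gn_le1: "norm (snd p) \<le> 1 \<Longrightarrow> gn e k p \<le> 1"
  unfolding gn_def by (smt (verit) norm_ge_zero power_le_one zero_le_power2)

lemma gn_le_sq:
  assumes on: "\<forall>i j. e i \<bullet> e j = (if i = j then 1 else 0)"
  shows "gn e k p \<le> (snd p \<bullet> e k)\<^sup>2"
  unfolding gn_def fk_def by (rule gain_le[OF norm_e[OF on]])

lemma G_take: "\<tau> \<le> length s \<Longrightarrow> G e k (take \<tau> s) = (\<Sum>i<\<tau>. gn e k (s ! i))"
  unfolding G_def by (simp add: min_def)

lemma Rch_bound:
  assumes on: "\<forall>i j. e i \<bullet> e j = (if i = j then 1 else 0)"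
    and tau: "\<tau> \<le> length s" and sY: "\<And>t. t < length s \<Longrightarrow> norm (snd (s ! t)) \<le> 1"
  shows "finite (Rch e \<tau> s) \<and> card (Rch e \<tau> s) \<le> \<tau>"
proof -
  have key: "card D \<le> \<tau>" if D: "finite D" "D \<subseteq> Rch e \<tau> s" for D
  proof -
    have "real (card D) = (\<Sum>k\<in>D. 1)" by simp
    also have "\<dots> \<le> (\<Sum>k\<in>D. G e k (take \<tau> s))"
      using D(2) by (intro sum_mono) (auto simp: Rch_def)
    also have "\<dots> = (\<Sum>k\<in>D. \<Sum>i<\<tau>. gn e k (s ! i))" using tau by (simp add: G_take)
    also have "\<dots> \<le> (\<Sum>k\<in>D. \<Sum>i<\<tau>. (snd (s ! i) \<bullet> e k)\<^sup>2)"
      by (intro sum_mono gn_le_sq[OF on])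
    also have "\<dots> = (\<Sum>i<\<tau>. \<Sum>k\<in>D. (snd (s ! i) \<bullet> e k)\<^sup>2)" by (rule sum.swap)
    also have "\<dots> \<le> (\<Sum>i<\<tau>. (norm (snd (s ! i)))\<^sup>2)"
      by (intro sum_mono bessel_finite[OF on D(1)])
    also have "\<dots> \<le> (\<Sum>i<\<tau>. 1)"
      using tau sY by (intro sum_mono) (simp add: power_le_one)
    finally show ?thesis by simp
  qed
  have fin: "finite (Rch e \<tau> s)"
  proof (rule ccontr)
    assume "infinite (Rch e \<tau> s)"
    then obtain D where "finite D" "card D = Suc \<tau>" "D \<subseteq> Rch e \<tau> s"
      using infinite_arbitrarily_large by blast
    then show False using key by fastforce
  qed
  show ?thesis using fin key[OF fin] by simp
qed

lemma sum_if_less: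
  fixes g :: "nat \<Rightarrow> real"
  assumes "\<tau> \<le> T"
  shows "(\<Sum>t<T. if t < \<tau> then g t else 0) = (\<Sum>t<\<tau>. g t)"
proof -
  have "{..<T} \<inter> {t. t < \<tau>} = {..<\<tau>}" using assms by auto
  then show ?thesis by (simp add: sum.If_cases)
qed

lemma expert_good:
  assumes on: "\<forall>i j. e i \<bullet> e j = (if i = j then 1 else 0)"
    and T: "length s = T" "1 \<le> T"
    and sX: "\<And>t. t < length s \<Longrightarrow> summable (\<lambda>n. \<bar>fst (s ! t) \<bullet> e n\<bar>) \<and> (\<Sum>n. \<bar>fst (s ! t) \<bullet> e n\<bar>) \<le> 1"
    and sY: "\<And>t. t < length s \<Longrightarrow> norm (snd (s ! t)) \<le> 1"
  shows "\<exists>j\<in>JT T. (\<Sum>t<T. eloss e j s t) \<le> (\<Sum>t<T. (norm (fk e k (fst (s ! t)) - snd (s ! t)))\<^sup>2) + 2"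
proof -
  let ?loss = "\<lambda>t. (norm (fk e k (fst (s ! t)) - snd (s ! t)))\<^sup>2"
  have clip: "clipb (fk e k (fst (s ! t))) = fk e k (fst (s ! t))" if "t < T" for t
    using norm_fk_le[OF on, of "fst (s ! t)" k] sX[of t] that T unfolding clipb_def by auto
  have lossgn: "(norm (snd (s ! t)))\<^sup>2 = ?loss t + gn e k (s ! t)" for t
    unfolding gn_def by simp
  have GT: "G e k (take \<tau> s) = (\<Sum>i<\<tau>. gn e k (s ! i))" if "\<tau> \<le> T" for \<tau>
    using G_take[of \<tau> s e k] that T by simp
  show ?thesis
  proof (cases "G e k (take T s) < 1")
    case True
    have R0: "Rch e 0 h = {}" for h unfolding Rch_def G_def by simp
    have e0: "eloss e (0, 0) s t = (norm (snd (s ! t)))\<^sup>2" for t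
      unfolding eloss_def expert_def by (simp add: R0)
    have "(\<Sum>t<T. eloss e (0, 0) s t) = (\<Sum>t<T. ?loss t) + G e k (take T s)"
      unfolding e0 lossgn GT[OF order_refl] by (simp add: sum.distrib)
    moreover have "(0, 0) \<in> JT T" unfolding JT_def using T by auto
    ultimately show ?thesis using True by (intro bexI[of _ "(0,0)"]) auto
  next
    case False
    define \<tau> where "\<tau> = (LEAST m. 1 \<le> G e k (take m s))"
    have tauT: "\<tau> \<le> T" unfolding \<tau>_def by (rule Least_le) (use False in linarith)
    have Gtau: "1 \<le> G e k (take \<tau> s)" unfolding \<tau>_def by (rule LeastI[of _ T]) (use False in linarith)
    have tau0: "\<tau> \<noteq> 0" 
    proof
      assume "\<tau> = 0"
      then have "G e k (take \<tau> s) = 0" by (simp add: G_def)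
      with Gtau show False by simp
    qed
    have Gprev: "\<not> 1 \<le> G e k (take (\<tau> - 1) s)"
    proof -
      have lt: "\<tau> - 1 < \<tau>" using tau0 by simp
      from lt have "\<tau> - 1 < (LEAST m. 1 \<le> G e k (take m s))" by (simp only: \<tau>_def)
      then show ?thesis by (rule not_less_Least)
    qed
    have "G e k (take \<tau> s) = G e k (take (\<tau> - 1) s) + gn e k (s ! (\<tau> - 1))"
      using GT[OF tauT] GT[of "\<tau> - 1"] tauT tau0 by (cases \<tau>) auto
    also have "gn e k (s ! (\<tau> - 1)) \<le> 1" using sY[of "\<tau> - 1"] tauT tau0 T by (intro gn_le1) auto
    finally have Gtau2: "G e k (take \<tau> s) \<le> 2" using Gprev by simp
    define R where "R = Rch e \<tau> s"
    have finR: "finite R" and cardR: "card R \<le> \<tau>"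
      using Rch_bound[OF on, of \<tau> s] tauT T sY unfolding R_def by auto
    have kR: "k \<in> R" unfolding R_def Rch_def using Gtau by simp
    then obtain i where i: "i < length (sorted_list_of_set R)" "sorted_list_of_set R ! i = k"
      using finR by (metis in_set_conv_nth set_sorted_list_of_set)
    have iT: "i < T" using i(1) cardR tauT by simp
    have jJ: "(\<tau>, i) \<in> JT T" unfolding JT_def using tauT iT by auto
    have el: "eloss e (\<tau>, i) s t = ?loss t + (if t < \<tau> then gn e k (s ! t) else 0)" if t: "t < T" for t
    proof (cases "t < \<tau>")
      case True
      have "expert e (\<tau>, i) (take t s) (fst (s ! t)) = 0" unfolding expert_def using True t T by simp
      then show ?thesis using True by (simp add: eloss_def lossgn)
    next
      case False
      have "Rch e \<tau> (take t s) = R" unfolding R_def Rch_def using False by (simp add: min_def)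
      then have "expert e (\<tau>, i) (take t s) (fst (s ! t)) = fk e k (fst (s ! t))"
        unfolding expert_def using t T False i clip[OF t] by (simp add: length_sorted_list_of_set)
      then show ?thesis using False by (simp add: eloss_def)
    qed
    have "(\<Sum>t<T. eloss e (\<tau>, i) s t) = (\<Sum>t<T. ?loss t) + (\<Sum>t<T. if t < \<tau> then gn e k (s ! t) else 0)"
      by (simp add: el sum.distrib)
    also have "(\<Sum>t<T. if t < \<tau> then gn e k (s ! t) else 0) = G e k (take \<tau> s)"
      using sum_if_less[OF tauT] GT[OF tauT] by simp
    finally show ?thesis using Gtau2 jJ by (intro bexI[of _ "(\<tau>, i)"]) auto
  qed
qed

lemma card_signs: "card (signs T) = 2 ^ T"
proof -
  have "signs T = {xs. set xs \<subseteq> {-1, 1::real} \<and> length xs = T}" unfolding signs_def by auto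
  moreover have "card {-1, 1::real} = 2" by simp
  ultimately show ?thesis using card_lists_length_eq[of "{-1, 1::real}" T] by (simp add: numeral_2_eq_2)
qed

lemma finite_signs: "finite (signs T)"
proof -
  have "signs T = {xs. set xs \<subseteq> {-1, 1::real} \<and> length xs = T}" unfolding signs_def by auto
  then show ?thesis by (simp add: finite_lists_length_eq)
qed

definition cpos :: "nat \<Rightarrow> real list \<Rightarrow> real" where
  "cpos T \<sigma> = (\<Sum>t<T. if \<sigma> ! t = 1 then 1 else 0)"

lemma sum_cpos: "(\<Sum>\<sigma>\<in>signs T. cpos T \<sigma>) = real T * 2 ^ T / 2"
proof -
  define neg where "neg = (\<lambda>\<sigma>::real list. map uminus \<sigma>)"
  have negS: "neg \<sigma> \<in> signs T" if "\<sigma> \<in> signs T" for \<sigma>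
    using that unfolding signs_def neg_def by auto
  have negneg: "neg (neg \<sigma>) = \<sigma>" for \<sigma> unfolding neg_def by (simp add: comp_def)
  have re: "(\<Sum>\<sigma>\<in>signs T. cpos T (neg \<sigma>)) = (\<Sum>\<sigma>\<in>signs T. cpos T \<sigma>)"
    by (rule sum.reindex_bij_witness[of _ neg neg]) (auto simp: negS negneg)
  have pair: "cpos T \<sigma> + cpos T (neg \<sigma>) = real T" if "\<sigma> \<in> signs T" for \<sigma>
  proof -
    have "\<sigma> ! t = -1 \<or> \<sigma> ! t = 1" if "t < T" for t
      using \<open>\<sigma> \<in> signs T\<close> that unfolding signs_def by (auto dest!: nth_mem)
    then have "(if \<sigma> ! t = 1 then 1 else 0) + (if neg \<sigma> ! t = 1 then 1 else 0) = (1::real)" if "t < T" for t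
      using that \<open>\<sigma> \<in> signs T\<close> unfolding neg_def signs_def by auto
    then show ?thesis unfolding cpos_def by (simp add: sum.distrib[symmetric])
  qed
  have "2 * (\<Sum>\<sigma>\<in>signs T. cpos T \<sigma>) = (\<Sum>\<sigma>\<in>signs T. cpos T \<sigma> + cpos T (neg \<sigma>))"
    using re by (simp add: sum.distrib)
  also have "\<dots> = (\<Sum>\<sigma>\<in>signs T. real T)" by (intro sum.cong) (auto simp: pair)
  also have "\<dots> = real T * 2 ^ T" by (simp add: card_signs)
  finally show ?thesis by simp
qed

lemma rad_bound:
  fixes e :: "nat \<Rightarrow> 'a::real_inner"
  assumes on: "\<forall>i j. e i \<bullet> e j = (if i = j then 1 else 0)"
    and eX: "\<And>t. e t \<in> X" and zY: "(0::'a) \<in> Y"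
  shows "seq_rad X Y T (range (fk e)) \<ge> ereal (real T / 2)"
proof -
  let ?xy = "(\<lambda>(t::nat) (\<sigma>::real list). e t, \<lambda>(t::nat) (\<sigma>::real list). (0::'a))"
  have mem: "?xy \<in> {(x, y). \<forall>t \<sigma>. x t \<sigma> \<in> X \<and> y t \<sigma> \<in> Y}" using eX zY by auto
  have each: "ereal (cpos T \<sigma>) \<le> (SUP f\<in>range (fk e).
        ereal (\<Sum>t<T. \<sigma> ! t * (norm (f (fst ?xy t (take t \<sigma>)) - snd ?xy t (take t \<sigma>)))\<^sup>2))"
    if "\<sigma> \<in> signs T" for \<sigma>
  proof -
    define k where "k = set_encode {t. t < T \<and> \<sigma> ! t = 1}"
    have dk: "set_decode k = {t. t < T \<and> \<sigma> ! t = 1}" unfolding k_def by simp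
    have "(\<Sum>t<T. \<sigma> ! t * (norm (fk e k (e t) - 0))\<^sup>2) = cpos T \<sigma>"
      unfolding cpos_def fk_def
      by (intro sum.cong refl) (simp add: inner_W[OF on] dk norm_e[OF on])
    then show ?thesis by (intro SUP_upper2[of "fk e k"]) auto
  qed
  have "ereal (real T / 2) = ereal (1 / 2 ^ T) * (\<Sum>\<sigma>\<in>signs T. ereal (cpos T \<sigma>))"
    by (simp add: sum_cpos)
  also have "\<dots> \<le> ereal (1 / 2 ^ T) * (\<Sum>\<sigma>\<in>signs T. SUP f\<in>range (fk e).
        ereal (\<Sum>t<T. \<sigma> ! t * (norm (f (fst ?xy t (take t \<sigma>)) - snd ?xy t (take t \<sigma>)))\<^sup>2))"
    by (intro ereal_mult_left_mono sum_mono each) auto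
  also have "\<dots> \<le> seq_rad X Y T (range (fk e))"
    unfolding seq_rad_def by (rule SUP_upper[OF mem])
  finally show ?thesis .
qed

lemma finite_JT: "finite (JT T)" unfolding JT_def by simp

lemma card_JT: "card (JT T) = (T + 1) * T" unfolding JT_def by (simp add: card_cartesian_product)

lemma learner_bound:
  assumes on: "\<forall>i j. e i \<bullet> e j = (if i = j then 1 else 0)"
    and T: "length s = T" "1 \<le> T" and eta: "0 < \<eta>"
    and sX: "\<And>t. t < length s \<Longrightarrow> summable (\<lambda>n. \<bar>fst (s ! t) \<bullet> e n\<bar>) \<and> (\<Sum>n. \<bar>fst (s ! t) \<bullet> e n\<bar>) \<le> 1"
    and sY: "\<And>t. t < length s \<Longrightarrow> norm (snd (s ! t)) \<le> 1"
  shows "cum_loss (learner e T \<eta>) s \<le> (\<Sum>t<T. (norm (fk e k (fst (s ! t)) - snd (s ! t)))\<^sup>2) + 2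
           + ln (card (JT T)) / \<eta> + 8 * \<eta> * T"
proof -
  obtain j where j: "j \<in> JT T" and jb: "(\<Sum>t<T. eloss e j s t) \<le> (\<Sum>t<T. (norm (fk e k (fst (s ! t)) - snd (s ! t)))\<^sup>2) + 2"
    using expert_good[OF on T sX sY] by blast
  have Jne: "JT T \<noteq> {}" using j by auto
  have l0: "0 \<le> eloss e j' s t" for j' t unfolding eloss_def by simp
  have l4: "eloss e j' s t \<le> 4" if "t < T" for j' t
  proof -
    have "norm (expert e j' (take t s) (fst (s ! t)) - snd (s ! t)) \<le> norm (expert e j' (take t s) (fst (s ! t))) + norm (snd (s ! t))"
      by (rule norm_triangle_ineq4)
    also have "\<dots> \<le> 2" using norm_expert[of e j'] sY[of t] that T by (smt (verit))
    finally have "(norm (expert e j' (take t s) (fst (s ! t)) - snd (s ! t)))\<^sup>2 \<le> 2\<^sup>2"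
      by (intro power_mono) auto
    then show ?thesis unfolding eloss_def by simp
  qed
  define l where "l j' t = (if t < T then eloss e j' s t else 0)" for j' t
  have "(\<Sum>t<T. (norm (learner e T \<eta> (take t s) (fst (s ! t)) - snd (s ! t)))\<^sup>2)
      \<le> (\<Sum>t<T. l j t) + ln (card (JT T)) / \<eta> + 8 * \<eta> * T"
  proof (rule hedge[OF finite_JT Jne eta _ _ _ j])
    show "0 \<le> l j' t" for j' t unfolding l_def using l0 by simp
    show "l j' t \<le> 4" for j' t unfolding l_def using l4 by simp
  next
    fix t assume t: "t < T"
    have Lx: "Lx e j' (take t s) = (\<Sum>t'<t. l j' t')" for j'
      using t T by (simp add: Lx_take l_def)
    have "(norm (learner e T \<eta> (take t s) (fst (s ! t)) - snd (s ! t)))\<^sup>2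
        \<le> (\<Sum>j'\<in>JT T. exp (- \<eta> * Lx e j' (take t s)) * (norm (expert e j' (take t s) (fst (s ! t)) - snd (s ! t)))\<^sup>2)
           / (\<Sum>j'\<in>JT T. exp (- \<eta> * Lx e j' (take t s)))"
      unfolding learner_def by (rule mixture_loss[OF finite_JT]) (use Jne finite_JT in \<open>auto intro!: sum_pos\<close>)
    also have "\<dots> = (\<Sum>j'\<in>JT T. exp (- \<eta> * (\<Sum>t'<t. l j' t')) * l j' t) / (\<Sum>j'\<in>JT T. exp (- \<eta> * (\<Sum>t'<t. l j' t')))"
      unfolding Lx using t by (simp add: l_def eloss_def)
    finally show "(norm (learner e T \<eta> (take t s) (fst (s ! t)) - snd (s ! t)))\<^sup>2 \<le> \<dots>" .
  qed
  also have "(\<Sum>t<T. l j t) = (\<Sum>t<T. eloss e j s t)" unfolding l_def by simp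
  finally show ?thesis unfolding cum_loss_def using T jb by simp
qed

lemma eta_bound:
  assumes T: "1 \<le> T"
  defines "N \<equiv> real (card (JT T))"
  defines "\<eta> \<equiv> sqrt (8 * real T * ln N) / (8 * real T)"
  shows "0 < \<eta> \<and> ln N / \<eta> + 8 * \<eta> * real T \<le> 8 * sqrt (real T * ln (2 * real T))"
proof -
  have N: "N = (real T + 1) * real T" unfolding N_def card_JT by (simp add: algebra_simps)
  have N2: "2 \<le> N"
  proof -
    have "(1 + 1) * 1 \<le> (real T + 1) * real T" using T by (intro mult_mono) auto
    then show ?thesis unfolding N by simp
  qed
  have lnN: "0 < ln N" using N2 by simp
  define c where "c = sqrt (8 * real T * ln N)"
  have c0: "0 < c" unfolding c_def using lnN T by simp
  have cc: "c * c = 8 * real T * ln N" unfolding c_def using lnN T by simp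
  have eta0: "0 < \<eta>" unfolding \<eta>_def c_def[symmetric] using c0 T by simp
  have "ln N / \<eta> + 8 * \<eta> * real T = 2 * c"
    unfolding \<eta>_def c_def[symmetric] using c0 T cc by (simp add: field_simps)
  also have "\<dots> = sqrt (32 * real T * ln N)"
  proof -
    have "sqrt (32 * real T * ln N) = sqrt (2\<^sup>2 * (8 * real T * ln N))" by simp
    also have "\<dots> = 2 * c" unfolding c_def real_sqrt_mult by simp
    finally show ?thesis by simp
  qed
  also have "\<dots> \<le> sqrt (64 * (real T * ln (2 * real T)))"
  proof (rule real_sqrt_le_mono)
    have "N \<le> (2 * real T)\<^sup>2" unfolding N using T by (simp add: power2_eq_square algebra_simps)
    then have "ln N \<le> ln ((2 * real T)\<^sup>2)" using N2 by (intro ln_mono) auto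
    also have "\<dots> = 2 * ln (2 * real T)" using T by (subst ln_realpow) auto
    finally show "32 * real T * ln N \<le> 64 * (real T * ln (2 * real T))" using T by simp
  qed
  also have "\<dots> = sqrt (8\<^sup>2 * (real T * ln (2 * real T)))" by simp
  also have "\<dots> = 8 * sqrt (real T * ln (2 * real T))"
    unfolding real_sqrt_mult by simp
  finally show ?thesis using eta0 by simp
qed

theorem theorem6:
  fixes e :: "nat \<Rightarrow> 'a::{real_inner, complete_space}"
  assumes orthonormal: "\<forall>i j. e i \<bullet> e j = (if i = j then 1 else 0)"
    and complete_basis: "closure (span (range e)) = UNIV"
  defines "X \<equiv> {v. summable (\<lambda>n. \<bar>v \<bullet> e n\<bar>) \<and> (\<Sum>n. \<bar>v \<bullet> e n\<bar>) \<le> 1}"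
    and "Y \<equiv> cball (0::'a) 1"
  shows "\<exists>F. F \<subseteq> {f. trace_class f} \<and>
           (\<forall>T::nat. T \<ge> 1 \<longrightarrow>
              seq_rad X Y T F \<ge> ereal (real T / 2) \<and>
              (INF P\<in>learners Y. regret X Y T F P)
                 \<le> ereal (2 + 8 * sqrt (real T * ln (2 * real T))))"
proof (intro exI[of _ "range (fk e)"] conjI allI impI)
  show "range (fk e) \<subseteq> {f. trace_class f}"
    unfolding fk_def using rank_one_trace_class by blast
next
  fix T :: nat assume T: "1 \<le> T"
  have eX: "e t \<in> X" for t
  proof -
    have "(\<lambda>n. \<bar>e t \<bullet> e n\<bar>) = (\<lambda>n. if n = t then 1 else 0)"
      using orthonormal by (auto simp: fun_eq_iff)
    moreover have "(\<lambda>n. if n = t then 1 else (0::real)) sums 1"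
      using sums_single[of t "\<lambda>_. 1::real"] by simp
    ultimately show ?thesis unfolding X_def by (simp add: sums_iff)
  qed
  show "seq_rad X Y T (range (fk e)) \<ge> ereal (real T / 2)"
    by (rule rad_bound[OF orthonormal eX]) (simp add: Y_def)
next
  fix T :: nat assume T: "1 \<le> T"
  define N where "N = real (card (JT T))"
  define \<eta> where "\<eta> = sqrt (8 * real T * ln N) / (8 * real T)"
  have eb: "0 < \<eta> \<and> ln N / \<eta> + 8 * \<eta> * real T \<le> 8 * sqrt (real T * ln (2 * real T))"
    unfolding \<eta>_def N_def by (rule eta_bound[OF T])
  define L where "L = learner e T \<eta>"
  have LY: "L h x \<in> Y" for h x
  proof -
    have "norm (L h x) \<le> 1"
    proof (cases "JT T = {}")
      case True then show ?thesis unfolding L_def learner_def by simp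
    next
      case False
      define w where "w j = exp (- \<eta> * Lx e j h)" for j
      have wpos: "0 < (\<Sum>j\<in>JT T. w j)" unfolding w_def using False finite_JT by (intro sum_pos) auto
      have "norm (\<Sum>j\<in>JT T. w j *\<^sub>R expert e j h x) \<le> (\<Sum>j\<in>JT T. norm (w j *\<^sub>R expert e j h x))"
        by (rule norm_sum)
      also have "\<dots> \<le> (\<Sum>j\<in>JT T. w j)"
        using norm_expert[of e _ h x] by (intro sum_mono) (simp add: w_def mult_left_le_one_le)
      finally show ?thesis unfolding L_def learner_def w_def[symmetric] using wpos
        by (simp add: field_simps)
    qed
    then show ?thesis unfolding Y_def by simp
  qed
  have Lmem: "return_pmf L \<in> learners Y" unfolding learners_def using LY by simp
  have "regret X Y T (range (fk e)) (return_pmf L) \<le> ereal (2 + 8 * sqrt (real T * ln (2 * real T)))"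
    unfolding regret_def
  proof (rule SUP_least)
    fix s assume s: "s \<in> {s. length s = T \<and> set s \<subseteq> X \<times> Y}"
    then have len: "length s = T" and sXY: "set s \<subseteq> X \<times> Y" by auto
    have sX: "summable (\<lambda>n. \<bar>fst (s ! t) \<bullet> e n\<bar>) \<and> (\<Sum>n. \<bar>fst (s ! t) \<bullet> e n\<bar>) \<le> 1" if "t < length s" for t
      using sXY nth_mem[OF that] unfolding X_def by (auto simp: mem_Times_iff)
    have sY: "norm (snd (s ! t)) \<le> 1" if "t < length s" for t
      using sXY nth_mem[OF that] unfolding Y_def by (auto simp: mem_Times_iff)
    define B where "B = 2 + 8 * sqrt (real T * ln (2 * real T))"
    have "cum_loss L s - B \<le> best_loss (range (fk e)) s"
      unfolding best_loss_def
    proof (rule cINF_greatest)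
      show "range (fk e) \<noteq> {}" by simp
    next
      fix f assume "f \<in> range (fk e)"
      then obtain k where f: "f = fk e k" by auto
      have "cum_loss L s \<le> (\<Sum>t<T. (norm (fk e k (fst (s ! t)) - snd (s ! t)))\<^sup>2) + 2 + ln N / \<eta> + 8 * \<eta> * T"
        unfolding L_def N_def by (rule learner_bound[OF orthonormal len T _ sX sY]) (use eb in auto)
      then show "cum_loss L s - B \<le> (\<Sum>t<length s. (norm (f (fst (s ! t)) - snd (s ! t)))\<^sup>2)"
        using eb len f unfolding B_def by simp
    qed
    then show "ereal (measure_pmf.expectation (return_pmf L) (\<lambda>A. cum_loss A s - best_loss (range (fk e)) s))
        \<le> ereal (2 + 8 * sqrt (real T * ln (2 * real T)))"
      unfolding B_def by simp
  qed
  then show "(INF P\<in>learners Y. regret X Y T (range (fk e)) P) \<le> ereal (2 + 8 * sqrt (real T * ln (2 * real T)))"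
    by (rule INF_lower2[OF Lmem])
qed

end
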